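(* Let $\mathbf{C}$ be a category of $\mathbf{FI}$ type and $M_\bullet=\bigoplus_i\mathrm{Ind}_{c_i}(V_i)$ a free $\mathbf{C}$-module of degree $\leq c$. Then in the coinvariant $\mathbf{C}$-module $d\mapsto M_d/G_d$, every map induced by a morphism of $\mathbf{C}$ is injective, and every map induced by a morphism $d\to e$ between objects with $c\leq d$ is an isomorphism. Moreover, for every object $d$ with $c_i\leq d$ for all $i$, one has $M_d/G_d\cong\bigoplus_i V_i/G_{c_i}$.
   Context: A category $\mathbf{C}$ is of $\mathbf{FI}$ type if: (1) all Hom-sets are finite; (2) every morphism is a monomorphism and every endomorphism is an isomorphism; (3) for all objects $c,d$ the group $G_d=\mathrm{Aut}_{\mathbf{C}}(d)$ acts transitively on $\mathrm{Hom}_{\mathbf{C}}(c,d)$; (4) for every $d$ only finitely many isomorphism classes of $c$ have $\mathrm{Hom}(c,d)\neq\emptyset$; (5) every pair $c_1\to d\leftarrow c_2$ has a pullback, and every pair $f_i:p\to c_i$ has a weak push-out, i.e. a commutative pullback square $g_i:c_i\to d$ such that for every other pullback square $h_i:c_i\to z$ with $h_1f_1=h_2f_2$ there is a unique $h:d\to z$ with $hg_i=h_i$. Write $c\leq d$ if $\mathrm{Hom}(c,d)\neq\emptyset$. A $\mathbf{C}$-module is a functor to complex vector spaces. For a finite-dimensional $G_c$-representation $V$, $\mathrm{Ind}_c(V)$ is $d\mapsto\mathbb{C}[\mathrm{Hom}(c,d)]\otimes_{\mathbb{C}[G_c]}V$. A free module is a finite direct sum of these, of degree $\leq d$ if each summand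 $\mathrm{Ind}_c(V)$ ($V\neq0$) has $c\leq d$. $W/G$ denotes coinvariants; for a $\mathbf{C}$-module these form a $\mathbf{C}$-module. *)

theory Defs
  imports Complex_Main "HOL-Library.Function_Algebras"
begin

record ('o, 'm) cat =
  Ob   :: "'o set"
  Hom  :: "'o \<Rightarrow> 'o \<Rightarrow> 'm set"
  comp :: "'m \<Rightarrow> 'm \<Rightarrow> 'm"   (* comp C g f = g \<circ> f *)
  idm  :: "'o \<Rightarrow> 'm"

definition is_category :: "('o, 'm) cat \<Rightarrow> bool" where
  "is_category C \<longleftrightarrow>
     (\<forall>a b. (a \<notin> Ob C \<or> b \<notin> Ob C) \<longrightarrow> Hom C a b = {}) \<and>
     (\<forall>a b a' b' f. f \<in> Hom C a b \<and> f \<in> Hom C a' b' \<longrightarrow> a = a' \<and> b = b') \<and>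
     (\<forall>a\<in>Ob C. idm C a \<in> Hom C a a) \<and>
     (\<forall>a b c f g. f \<in> Hom C a b \<and> g \<in> Hom C b c \<longrightarrow> comp C g f \<in> Hom C a c) \<and>
     (\<forall>a b c d f g h. f \<in> Hom C a b \<and> g \<in> Hom C b c \<and> h \<in> Hom C c d \<longrightarrow>
         comp C h (comp C g f) = comp C (comp C h g) f) \<and>
     (\<forall>a b f. f \<in> Hom C a b \<longrightarrow> comp C (idm C b) f = f \<and> comp C f (idm C a) = f)"

definition is_iso :: "('o, 'm) cat \<Rightarrow> 'o \<Rightarrow> 'o \<Rightarrow> 'm \<Rightarrow> bool" where
  "is_iso C a b f \<longleftrightarrow> f \<in> Hom C a b \<and>
     (\<exists>g\<in>Hom C b a. comp C g f = idm C a \<and> comp C f g = idm C b)"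

definition Aut :: "('o, 'm) cat \<Rightarrow> 'o \<Rightarrow> 'm set" where
  "Aut C d = {f. is_iso C d d f}"

definition obj_iso :: "('o, 'm) cat \<Rightarrow> 'o \<Rightarrow> 'o \<Rightarrow> bool" where
  "obj_iso C a b \<longleftrightarrow> (\<exists>f. is_iso C a b f)"

definition is_mono :: "('o, 'm) cat \<Rightarrow> 'o \<Rightarrow> 'o \<Rightarrow> 'm \<Rightarrow> bool" where
  "is_mono C a b f \<longleftrightarrow> f \<in> Hom C a b \<and>
     (\<forall>x\<in>Ob C. \<forall>g\<in>Hom C x a. \<forall>h\<in>Hom C x a. comp C f g = comp C f h \<longrightarrow> g = h)"

text \<open>c \<le> d in the paper: Hom(c,d) is nonempty.\<close>
definition obj_le :: "('o, 'm) cat \<Rightarrow> 'o \<Rightarrow> 'o \<Rightarrow> bool" where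
  "obj_le C c d \<longleftrightarrow> Hom C c d \<noteq> {}"

definition is_pullback ::
  "('o, 'm) cat \<Rightarrow> 'o \<Rightarrow> 'o \<Rightarrow> 'o \<Rightarrow> 'o \<Rightarrow> 'm \<Rightarrow> 'm \<Rightarrow> 'm \<Rightarrow> 'm \<Rightarrow> bool" where
  "is_pullback C p c1 c2 d p1 p2 f1 f2 \<longleftrightarrow>
     p \<in> Ob C \<and> p1 \<in> Hom C p c1 \<and> p2 \<in> Hom C p c2 \<and> f1 \<in> Hom C c1 d \<and> f2 \<in> Hom C c2 d \<and>
     comp C f1 p1 = comp C f2 p2 \<and>
     (\<forall>z\<in>Ob C. \<forall>h1\<in>Hom C z c1. \<forall>h2\<in>Hom C z c2. comp C f1 h1 = comp C f2 h2 \<longrightarrow>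
        (\<exists>!h. h \<in> Hom C z p \<and> comp C p1 h = h1 \<and> comp C p2 h = h2))"

definition FI_type :: "('o, 'm) cat \<Rightarrow> bool" where
  "FI_type C \<longleftrightarrow> is_category C \<and>
     \<comment> \<open>(1) finite Hom-sets\<close>
     (\<forall>a\<in>Ob C. \<forall>b\<in>Ob C. finite (Hom C a b)) \<and>
     \<comment> \<open>(2) monomorphisms; endomorphisms are isomorphisms\<close>
     (\<forall>a b f. f \<in> Hom C a b \<longrightarrow> is_mono C a b f) \<and>
     (\<forall>a f. f \<in> Hom C a a \<longrightarrow> is_iso C a a f) \<and>
     \<comment> \<open>(3) Aut(d) acts transitively on Hom(c,d)\<close>
     (\<forall>c\<in>Ob C. \<forall>d\<in>Ob C. \<forall>f\<in>Hom C c d. \<forall>f'\<in>Hom C c d. \<exists>g\<in>Aut C d. comp C g f = f') \<and>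
     \<comment> \<open>(4) finitely many isomorphism classes below each object\<close>
     (\<forall>d\<in>Ob C. \<exists>S. finite S \<and> S \<subseteq> Ob C \<and>
        (\<forall>c\<in>Ob C. Hom C c d \<noteq> {} \<longrightarrow> (\<exists>s\<in>S. obj_iso C c s))) \<and>
     \<comment> \<open>(5a) pullbacks\<close>
     (\<forall>c1 c2 d f1 f2. f1 \<in> Hom C c1 d \<and> f2 \<in> Hom C c2 d \<longrightarrow>
        (\<exists>p p1 p2. is_pullback C p c1 c2 d p1 p2 f1 f2)) \<and>
     \<comment> \<open>(5b) weak push-outs\<close>
     (\<forall>p c1 c2 f1 f2. f1 \<in> Hom C p c1 \<and> f2 \<in> Hom C p c2 \<longrightarrow>
        (\<exists>d g1 g2. d \<in> Ob C \<and> is_pullback C p c1 c2 d f1 f2 g1 g2 \<and>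
           (\<forall>z h1 h2. is_pullback C p c1 c2 z f1 f2 h1 h2 \<longrightarrow>
              (\<exists>!h. h \<in> Hom C d z \<and> comp C h g1 = h1 \<and> comp C h g2 = h2))))"

definition fsc :: "(complex \<Rightarrow> 'v \<Rightarrow> 'v) \<Rightarrow> complex \<Rightarrow> ('i \<Rightarrow> 'v) \<Rightarrow> ('i \<Rightarrow> 'v)" where
  "fsc sc a x = (\<lambda>i. sc a (x i))"

definition lin_on :: "(complex \<Rightarrow> 'a::ab_group_add \<Rightarrow> 'a) \<Rightarrow> (complex \<Rightarrow> 'b::ab_group_add \<Rightarrow> 'b) \<Rightarrow> 'a set \<Rightarrow>
    ('a \<Rightarrow> 'b) \<Rightarrow> bool" where
  "lin_on s1 s2 A h \<longleftrightarrow> (\<forall>x\<in>A. \<forall>y\<in>A. h (x + y) = h x + h y) \<and>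
                         (\<forall>a. \<forall>x\<in>A. h (s1 a x) = s2 a (h x))"

text \<open>The map A/K \<rightarrow> B/L induced by h is injective, resp. surjective.\<close>
definition induced_inj :: "'a set \<Rightarrow> 'a set \<Rightarrow> 'b::ab_group_add set \<Rightarrow> ('a \<Rightarrow> 'b) \<Rightarrow> bool" where
  "induced_inj A K L h \<longleftrightarrow> (\<forall>x\<in>A. h x \<in> L \<longrightarrow> x \<in> K)"

definition induced_surj :: "'a set \<Rightarrow> 'b::ab_group_add set \<Rightarrow> 'b set \<Rightarrow> ('a \<Rightarrow> 'b) \<Rightarrow> bool" where
  "induced_surj A B L h \<longleftrightarrow> (\<forall>y\<in>B. \<exists>x\<in>A. y - h x \<in> L)"

definition quot_iso :: "(complex \<Rightarrow> 'a::ab_group_add \<Rightarrow> 'a) \<Rightarrow> 'a set \<Rightarrow> 'a set \<Rightarrow>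
    (complex \<Rightarrow> 'b::ab_group_add \<Rightarrow> 'b) \<Rightarrow> 'b set \<Rightarrow> 'b set \<Rightarrow> bool" where
  "quot_iso s1 A K s2 B L \<longleftrightarrow> (\<exists>h::'a \<Rightarrow> 'b.
      (\<forall>x\<in>A. h x \<in> B) \<and> lin_on s1 s2 A h \<and> (\<forall>x\<in>K. h x \<in> L) \<and>
      induced_inj A K L h \<and> induced_surj A B L h)"

definition is_rep :: "('o, 'm) cat \<Rightarrow> (complex \<Rightarrow> 'v::ab_group_add \<Rightarrow> 'v) \<Rightarrow> 'o \<Rightarrow> 'v set \<Rightarrow>
    ('m \<Rightarrow> 'v \<Rightarrow> 'v) \<Rightarrow> bool" where
  "is_rep C sc c V rho \<longleftrightarrow>
     module.subspace sc V \<and> (\<exists>B. finite B \<and> V = module.span sc B) \<and>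
     (\<forall>g\<in>Aut C c. (\<forall>v\<in>V. rho g v \<in> V) \<and> lin_on sc sc V (rho g)) \<and>
     (\<forall>v\<in>V. rho (idm C c) v = v) \<and>
     (\<forall>g\<in>Aut C c. \<forall>h\<in>Aut C c. \<forall>v\<in>V. rho (comp C g h) v = rho g (rho h v))"

text \<open>Ambient space for the value at d of the free module \<Oplus>_{i<n} Ind_{c_i}(V_i):
  \<Oplus>_{i<n} \<complex>[Hom(c_i,d)] \<otimes>_\<complex> V_i, as functions x i f \<in> V_i (f \<in> Hom(c_i,d)), zero elsewhere.\<close>
definition pre_mod :: "('o, 'm) cat \<Rightarrow> nat \<Rightarrow> (nat \<Rightarrow> 'o) \<Rightarrow> (nat \<Rightarrow> 'v::zero set) \<Rightarrow> 'o \<Rightarrow>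
    (nat \<Rightarrow> 'm \<Rightarrow> 'v) set" where
  "pre_mod C n c V d = {x. \<forall>i f. (i < n \<and> f \<in> Hom C (c i) d \<longrightarrow> x i f \<in> V i) \<and>
                                 (\<not> (i < n \<and> f \<in> Hom C (c i) d) \<longrightarrow> x i f = 0)}"

definition msc :: "(complex \<Rightarrow> 'v \<Rightarrow> 'v) \<Rightarrow> complex \<Rightarrow> (nat \<Rightarrow> 'm \<Rightarrow> 'v) \<Rightarrow> (nat \<Rightarrow> 'm \<Rightarrow> 'v)" where
  "msc sc a x = (\<lambda>i f. sc a (x i f))"

definition single :: "nat \<Rightarrow> 'm \<Rightarrow> 'v::zero \<Rightarrow> (nat \<Rightarrow> 'm \<Rightarrow> 'v)" where
  "single i f v = (\<lambda>j g. if j = i \<and> g = f then v else 0)"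

text \<open>Relations defining the tensor product over \<complex>[G_{c_i}]: (f \<circ> g) \<otimes> v = f \<otimes> g v.\<close>
definition tens_rel :: "('o, 'm) cat \<Rightarrow> (complex \<Rightarrow> 'v::ab_group_add \<Rightarrow> 'v) \<Rightarrow> nat \<Rightarrow> (nat \<Rightarrow> 'o) \<Rightarrow>
    (nat \<Rightarrow> 'v set) \<Rightarrow> (nat \<Rightarrow> 'm \<Rightarrow> 'v \<Rightarrow> 'v) \<Rightarrow> 'o \<Rightarrow> (nat \<Rightarrow> 'm \<Rightarrow> 'v) set" where
  "tens_rel C sc n c V rho d = module.span (msc sc)
     {single i (comp C f g) v - single i f (rho i g v) | i f g v.
        i < n \<and> f \<in> Hom C (c i) d \<and> g \<in> Aut C (c i) \<and> v \<in> V i}"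

definition push :: "('o, 'm) cat \<Rightarrow> (nat \<Rightarrow> 'o) \<Rightarrow> 'o \<Rightarrow> 'm \<Rightarrow> (nat \<Rightarrow> 'm \<Rightarrow> 'v::comm_monoid_add) \<Rightarrow>
    (nat \<Rightarrow> 'm \<Rightarrow> 'v)" where
  "push C c d phi x = (\<lambda>i f'. \<Sum>f\<in>{f. f \<in> Hom C (c i) d \<and> comp C phi f = f'}. x i f)"

text \<open>M_d = pre_mod / tens_rel; the coinvariants M_d / G_d are pre_mod / coinv_ker.\<close>
definition coinv_ker :: "('o, 'm) cat \<Rightarrow> (complex \<Rightarrow> 'v::ab_group_add \<Rightarrow> 'v) \<Rightarrow> nat \<Rightarrow> (nat \<Rightarrow> 'o) \<Rightarrow>
    (nat \<Rightarrow> 'v set) \<Rightarrow> (nat \<Rightarrow> 'm \<Rightarrow> 'v \<Rightarrow> 'v) \<Rightarrow> 'o \<Rightarrow> (nat \<Rightarrow> 'm \<Rightarrow> 'v) set" where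
  "coinv_ker C sc n c V rho d = module.span (msc sc)
     (tens_rel C sc n c V rho d \<union>
      {push C c d g x - x | g x. g \<in> Aut C d \<and> x \<in> pre_mod C n c V d})"

text \<open>\<Oplus>_{i<n} V_i and the kernel of \<Oplus>_{i<n} V_i \<rightarrow> \<Oplus>_{i<n} V_i / G_{c_i}.\<close>
definition sum_reps :: "nat \<Rightarrow> (nat \<Rightarrow> 'v::zero set) \<Rightarrow> (nat \<Rightarrow> 'v) set" where
  "sum_reps n V = {w. \<forall>i. (i < n \<longrightarrow> w i \<in> V i) \<and> (i \<ge> n \<longrightarrow> w i = 0)}"

definition sum_coinv_ker :: "('o, 'm) cat \<Rightarrow> (complex \<Rightarrow> 'v::ab_group_add \<Rightarrow> 'v) \<Rightarrow> nat \<Rightarrow> (nat \<Rightarrow> 'o) \<Rightarrow>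
    (nat \<Rightarrow> 'v set) \<Rightarrow> (nat \<Rightarrow> 'm \<Rightarrow> 'v \<Rightarrow> 'v) \<Rightarrow> (nat \<Rightarrow> 'v) set" where
  "sum_coinv_ker C sc n c V rho = module.span (fsc sc)
     {(\<lambda>j. if j = i then rho i g v - v else 0) | i g v. i < n \<and> g \<in> Aut C (c i) \<and> v \<in> V i}"

end

theory Submission imports Defs begin

lemma sum_fun_apply: "(sum F A) x = sum (\<lambda>a. F a x) A"
  by (induction A rule: infinite_finite_induct) auto

lemma module_fsc: "module sc \<Longrightarrow> module (fsc sc)"
  unfolding module_def fsc_def by (auto simp: fun_eq_iff)

lemma module_msc: "module sc \<Longrightarrow> module (msc sc)"
  unfolding module_def msc_def by (auto simp: fun_eq_iff)

lemma vs_module: "vector_space sc \<Longrightarrow> module sc"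
  unfolding vector_space_def module_def by auto

locale fis =
  fixes C :: "('o, 'm) cat"
    and sc :: "complex \<Rightarrow> 'v::ab_group_add \<Rightarrow> 'v"
    and n :: nat and c :: "nat \<Rightarrow> 'o" and V :: "nat \<Rightarrow> 'v set"
    and rho :: "nat \<Rightarrow> 'm \<Rightarrow> 'v \<Rightarrow> 'v"
  assumes FI: "FI_type C"
    and vs: "vector_space sc"
    and objs: "\<forall>i<n. c i \<in> Ob C"
    and reps: "\<forall>i<n. is_rep C sc (c i) (V i) (rho i)"

sublocale fis \<subseteq> S0: module sc by (rule vs_module[OF vs])
sublocale fis \<subseteq> M: module "msc sc" by (rule module_msc[OF vs_module[OF vs]])
sublocale fis \<subseteq> F: module "fsc sc" by (rule module_fsc[OF vs_module[OF vs]])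

context fis begin

lemma cat: "is_category C" using FI by (simp add: FI_type_def)

lemma finHom: "finite (Hom C a b)"
proof (cases "a \<in> Ob C \<and> b \<in> Ob C")
  case True then show ?thesis using FI by (simp add: FI_type_def)
next
  case False then show ?thesis using cat by (auto simp: is_category_def)
qed

lemma compHom: "f \<in> Hom C a b \<Longrightarrow> g \<in> Hom C b e \<Longrightarrow> comp C g f \<in> Hom C a e"
proof -
  assume h: "f \<in> Hom C a b" "g \<in> Hom C b e"
  have "\<forall>a b c f g. f \<in> Hom C a b \<and> g \<in> Hom C b c \<longrightarrow> comp C g f \<in> Hom C a c"
    using cat unfolding is_category_def by (elim conjE) assumption
  then show ?thesis using h by blast
qed

lemma Aut_Hom: "g \<in> Aut C d \<Longrightarrow> g \<in> Hom C d d"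
  by (simp add: Aut_def is_iso_def)

lemma Hom_Ob: "f \<in> Hom C a b \<Longrightarrow> a \<in> Ob C \<and> b \<in> Ob C"
  using cat unfolding is_category_def by (metis empty_iff)

lemma trans_act: "f \<in> Hom C a d \<Longrightarrow> f' \<in> Hom C a d \<Longrightarrow> \<exists>g\<in>Aut C d. comp C g f = f'"
proof -
  assume h: "f \<in> Hom C a d" "f' \<in> Hom C a d"
  have "\<forall>c\<in>Ob C. \<forall>d\<in>Ob C. \<forall>f\<in>Hom C c d. \<forall>f'\<in>Hom C c d. \<exists>g\<in>Aut C d. comp C g f = f'"
    using FI unfolding FI_type_def by (elim conjE) assumption
  then show ?thesis using h Hom_Ob[OF h(1)] by blast
qed

lemma Vsub: "i < n \<Longrightarrow> S0.subspace (V i)"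
  using reps by (simp add: is_rep_def)

lemma V0: "i < n \<Longrightarrow> 0 \<in> V i" using Vsub S0.subspace_0 by blast

lemma rho_V: "i < n \<Longrightarrow> g \<in> Aut C (c i) \<Longrightarrow> v \<in> V i \<Longrightarrow> rho i g v \<in> V i"
  using reps by (simp add: is_rep_def)

definition Phi :: "'o \<Rightarrow> (nat \<Rightarrow> 'm \<Rightarrow> 'v) \<Rightarrow> nat \<Rightarrow> 'v" where
  "Phi d x = (\<lambda>i. if i < n then \<Sum>f\<in>Hom C (c i) d. x i f else 0)"

definition f0 :: "'o \<Rightarrow> nat \<Rightarrow> 'm" where
  "f0 d i = (SOME f. f \<in> Hom C (c i) d)"

definition I :: "'o \<Rightarrow> nat set" where
  "I d = {i. i < n \<and> Hom C (c i) d \<noteq> {}}"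

definition Psi :: "'o \<Rightarrow> (nat \<Rightarrow> 'v) \<Rightarrow> nat \<Rightarrow> 'm \<Rightarrow> 'v" where
  "Psi d w = (\<Sum>i\<in>I d. single i (f0 d i) (w i))"

abbreviation "K d \<equiv> coinv_ker C sc n c V rho d"
abbreviation "SK \<equiv> sum_coinv_ker C sc n c V rho"
abbreviation "P d \<equiv> pre_mod C n c V d"

lemma f0_Hom: "Hom C (c i) d \<noteq> {} \<Longrightarrow> f0 d i \<in> Hom C (c i) d"
  unfolding f0_def by (metis ex_in_conv someI)

lemma single_diff: "single i f a - single i f b = single i f (a - b :: 'v)"
  by (auto simp: single_def fun_eq_iff)
lemma single_add: "single i f a + single i f b = single i f (a + b :: 'v)"
  by (auto simp: single_def fun_eq_iff)
lemma single_zero: "single i f (0::'v) = 0"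
  by (auto simp: single_def fun_eq_iff)
lemma single_scale: "msc sc a (single i f v) = single i f (sc a v)"
  by (auto simp: single_def fun_eq_iff msc_def)

lemma Phi_add: "Phi d (x + y) = Phi d x + Phi d y"
  by (auto simp: Phi_def fun_eq_iff sum.distrib)
lemma Phi_diff: "Phi d (x - y) = Phi d x - Phi d y"
  by (auto simp: Phi_def fun_eq_iff sum_subtractf)
lemma Phi_scale: "Phi d (msc sc a x) = fsc sc a (Phi d x)"
  by (auto simp: Phi_def fun_eq_iff msc_def fsc_def S0.scale_sum_right)

lemma Phi_single: assumes i: "i < n" and f: "f \<in> Hom C (c i) d" shows
   "Phi d (single i f v) = (\<lambda>j. if j = i then v else 0)"
proof (rule ext)
  fix j
  show "Phi d (single i f v) j = (if j = i then v else 0)"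
  proof (cases "j = i")
    case True
    have "(\<Sum>g\<in>Hom C (c i) d. single i f v i g) = (\<Sum>g\<in>Hom C (c i) d. if g = f then v else 0)"
      by (intro sum.cong) (auto simp: single_def)
    also have "\<dots> = v" using f by (simp add: finHom)
    finally show ?thesis using True i by (simp add: Phi_def)
  next
    case False then show ?thesis by (simp add: Phi_def single_def)
  qed
qed

lemma Phi_zero: "Phi d 0 = 0"
  by (auto simp: Phi_def fun_eq_iff)

lemma Phi_sum: "Phi d (sum h A) = (\<Sum>a\<in>A. Phi d (h a))"
proof (induction A rule: infinite_finite_induct)
  case (insert x F) then show ?case by (simp only: sum.insert[OF insert.hyps(1,2)] Phi_add insert.IH)
next
  case (infinite A)
  then have "sum h A = 0" "(\<Sum>a\<in>A. Phi d (h a)) = 0" by simp_all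
  then show ?case by (simp only: Phi_zero)
next
  case empty then show ?case by (simp only: sum.empty Phi_zero)
qed

lemma single_sum: "single i f (sum h A) = (\<Sum>a\<in>A. single i f (h a :: 'v))"
  by (induction A rule: infinite_finite_induct) (auto simp: single_zero single_add[symmetric])

lemma push_single:
  assumes phi: "phi \<in> Hom C d e" and f: "f \<in> Hom C (c i) d"
  shows "push C c d phi (single i f v) = single i (comp C phi f) (v::'v)"
proof -
  have "(\<Sum>f''\<in>{f''. f'' \<in> Hom C (c j) d \<and> comp C phi f'' = f'}. single i f v j f'')
        = single i (comp C phi f) v j f'" for j f'
  proof (cases "j = i")
    case True
    have fin: "finite {f''. f'' \<in> Hom C (c j) d \<and> comp C phi f'' = f'}"
      by (rule finite_subset[OF _ finHom[of "c j" d]]) auto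
    have "(\<Sum>f''\<in>{f''. f'' \<in> Hom C (c j) d \<and> comp C phi f'' = f'}. single i f v j f'')
      = (\<Sum>f''\<in>{f''. f'' \<in> Hom C (c j) d \<and> comp C phi f'' = f'}. if f'' = f then v else 0)"
      using True by (intro sum.cong) (auto simp: single_def)
    also have "\<dots> = (if f \<in> {f''. f'' \<in> Hom C (c j) d \<and> comp C phi f'' = f'} then v else 0)"
      by (rule sum.delta[OF fin])
    also have "\<dots> = single i (comp C phi f) v j f'"
      using True f by (auto simp: single_def)
    finally show ?thesis .
  next
    case False
    then show ?thesis by (simp add: single_def)
  qed
  then show ?thesis by (simp add: push_def fun_eq_iff)
qed

lemma Phi_push:
  assumes phi: "phi \<in> Hom C d e"
  shows "Phi e (push C c d phi x) = Phi d x"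
proof -
  have "(\<Sum>f'\<in>Hom C (c i) e. \<Sum>f\<in>{f. f \<in> Hom C (c i) d \<and> comp C phi f = f'}. x i f)
        = (\<Sum>f\<in>Hom C (c i) d. x i f)" for i
    by (rule sum.group[OF finHom finHom]) (auto intro: compHom[OF _ phi])
  then show ?thesis by (simp add: Phi_def push_def fun_eq_iff)
qed

lemma single_P: "i < n \<Longrightarrow> f \<in> Hom C (c i) d \<Longrightarrow> v \<in> V i \<Longrightarrow> single i f v \<in> P d"
  by (auto simp: pre_mod_def single_def V0)

lemma PI: "(\<And>i f. i < n \<Longrightarrow> f \<in> Hom C (c i) d \<Longrightarrow> x i f \<in> V i) \<Longrightarrow>
  (\<And>i f. \<not> (i < n \<and> f \<in> Hom C (c i) d) \<Longrightarrow> x i f = 0) \<Longrightarrow> x \<in> P d"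
  unfolding pre_mod_def by (intro CollectI allI conjI impI) auto
lemma PD1: "x \<in> P d \<Longrightarrow> i < n \<Longrightarrow> f \<in> Hom C (c i) d \<Longrightarrow> x i f \<in> V i"
  unfolding pre_mod_def by blast
lemma PD2: "x \<in> P d \<Longrightarrow> \<not> (i < n \<and> f \<in> Hom C (c i) d) \<Longrightarrow> x i f = 0"
  unfolding pre_mod_def by blast

lemma P_sub: "M.subspace (P d)"
  unfolding M.subspace_def
proof (intro conjI ballI allI)
  show "0 \<in> P d" by (rule PI) (simp_all add: V0)
next
  fix x y assume xy: "x \<in> P d" "y \<in> P d"
  show "x + y \<in> P d"
  proof (rule PI)
    fix i f assume "i < n" "f \<in> Hom C (c i) d"
    then show "(x + y) i f \<in> V i"
      using PD1[OF xy(1)] PD1[OF xy(2)] S0.subspace_add[OF Vsub] by simp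
  next
    fix i f assume "\<not> (i < n \<and> f \<in> Hom C (c i) d)"
    then show "(x + y) i f = 0" using PD2[OF xy(1)] PD2[OF xy(2)] by simp
  qed
next
  fix a x assume x: "x \<in> P d"
  show "msc sc a x \<in> P d"
  proof (rule PI)
    fix i f assume "i < n" "f \<in> Hom C (c i) d"
    then show "msc sc a x i f \<in> V i"
      unfolding msc_def using PD1[OF x] S0.subspace_scale[OF Vsub] by simp
  next
    fix i f assume "\<not> (i < n \<and> f \<in> Hom C (c i) d)"
    then show "msc sc a x i f = 0" unfolding msc_def using PD2[OF x] by simp
  qed
qed

lemma push_P:
  assumes phi: "phi \<in> Hom C d e" and x: "x \<in> P d"
  shows "push C c d phi x \<in> P e"
proof (rule PI)
  fix i f' assume h: "i < n" "f' \<in> Hom C (c i) e"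
  show "push C c d phi x i f' \<in> V i" unfolding push_def
    by (rule S0.subspace_sum[OF Vsub[OF h(1)]]) (use PD1[OF x h(1)] in blast)
next
  fix i f' assume h: "\<not> (i < n \<and> f' \<in> Hom C (c i) e)"
  show "push C c d phi x i f' = 0" unfolding push_def
  proof (rule sum.neutral, intro ballI)
    fix f assume f: "f \<in> {f \<in> Hom C (c i) d. comp C phi f = f'}"
    then have "\<not> (i < n \<and> f \<in> Hom C (c i) d)" using h compHom[OF _ phi] by blast
    then show "x i f = 0" using PD2[OF x] by blast
  qed
qed

lemma Phi_P: assumes x: "x \<in> P d" shows "Phi d x \<in> sum_reps n V"
  unfolding sum_reps_def
proof (intro CollectI allI conjI impI)
  fix i assume i: "i < n"
  have "sum (x i) (Hom C (c i) d) \<in> V i"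
    by (rule S0.subspace_sum[OF Vsub[OF i]]) (use PD1[OF x i] in blast)
  then show "Phi d x i \<in> V i" unfolding Phi_def using i by simp
qed (simp add: Phi_def)


lemma finI: "finite (I d)" unfolding I_def by auto

lemma gen_a:
  assumes i: "i < n" and f: "f \<in> Hom C (c i) d" and f': "f' \<in> Hom C (c i) d" and v: "v \<in> V i"
  shows "single i f v - single i f' v \<in> K d"
proof -
  obtain a where a: "a \<in> Aut C d" "comp C a f' = f" using trans_act[OF f' f] by blast
  have "push C c d a (single i f' v) = single i f v"
    using push_single[OF Aut_Hom[OF a(1)] f'] a(2) by simp
  moreover have "single i f' v \<in> P d" by (rule single_P[OF i f' v])
  ultimately have "single i f v - single i f' v \<in> {push C c d g x - x | g x. g \<in> Aut C d \<and> x \<in> P d}"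
    apply - apply (rule CollectI, rule exI[of _ a], rule exI[of _ "single i f' v"]) using a(1) by simp
  then show ?thesis unfolding coinv_ker_def by (intro M.span_base) blast
qed

lemma tens_sub: "tens_rel C sc n c V rho d \<subseteq> K d"
  unfolding coinv_ker_def using M.span_superset by blast

lemma gen_b:
  assumes i: "i < n" and f: "f \<in> Hom C (c i) d" and g: "g \<in> Aut C (c i)" and v: "v \<in> V i"
  shows "single i f (rho i g v - v) \<in> K d"
proof -
  have fg: "comp C f g \<in> Hom C (c i) d" by (rule compHom[OF Aut_Hom[OF g] f])
  have "single i (comp C f g) v - single i f (rho i g v) \<in> tens_rel C sc n c V rho d"
    unfolding tens_rel_def by (rule M.span_base) (use i f g v in blast)
  then have t: "single i (comp C f g) v - single i f (rho i g v) \<in> K d" using tens_sub by blast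
  have a: "single i (comp C f g) v - single i f v \<in> K d" by (rule gen_a[OF i fg f v])
  have "single i f (rho i g v - v) = (single i (comp C f g) v - single i f v)
      - (single i (comp C f g) v - single i f (rho i g v))"
    by (simp add: single_diff[symmetric] algebra_simps)
  moreover have "(single i (comp C f g) v - single i f v)
      - (single i (comp C f g) v - single i f (rho i g v)) \<in> K d"
    unfolding coinv_ker_def by (rule M.span_diff[OF a[unfolded coinv_ker_def] t[unfolded coinv_ker_def]])
  ultimately show ?thesis by (simp only:)
qed

lemma Psi_zero: "Psi d 0 = 0"
  by (simp add: Psi_def single_zero)
lemma Psi_add: "Psi d (w + w') = Psi d w + Psi d w'"
  by (simp add: Psi_def single_add[symmetric] sum.distrib)
lemma Psi_scale: "Psi d (fsc sc a w) = msc sc a (Psi d w)"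
  by (simp add: Psi_def M.scale_sum_right single_scale fsc_def)

lemma Psi_SK: assumes w: "w \<in> SK" shows "Psi d w \<in> K d"
proof -
  have sub: "F.subspace {w. Psi d w \<in> K d}"
    unfolding F.subspace_def coinv_ker_def
    by (auto simp: Psi_zero Psi_add Psi_scale intro: M.span_zero M.span_add M.span_scale)
  show ?thesis using w unfolding sum_coinv_ker_def
  proof (induction rule: F.span_induct)
    case base then show ?case using sub by simp
  next
    case (step w)
    then obtain i g v where w: "w = (\<lambda>j. if j = i then rho i g v - v else 0)"
      and h: "i < n" "g \<in> Aut C (c i)" "v \<in> V i" by blast
    have "Psi d w = (\<Sum>j\<in>I d. if j = i then single i (f0 d i) (rho i g v - v) else 0)"
      unfolding Psi_def w by (intro sum.cong) (auto simp: single_zero)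
    also have "\<dots> = (if i \<in> I d then single i (f0 d i) (rho i g v - v) else 0)"
      by (simp add: finI)
    finally have eq: "Psi d w = \<dots>" .
    show ?case
    proof (cases "i \<in> I d")
      case True
      then have "f0 d i \<in> Hom C (c i) d" using f0_Hom by (auto simp: I_def)
      then show ?thesis using eq True gen_b[OF h(1) _ h(2,3)] by simp
    next
      case False then show ?thesis using eq unfolding coinv_ker_def by (simp only: if_False M.span_zero)
    qed
  qed
qed

lemma decomp: assumes y: "y \<in> P d"
  shows "y = (\<Sum>i\<in>I d. \<Sum>f\<in>Hom C (c i) d. single i f (y i f))"
proof (rule ext, rule ext)
  fix j g
  have inner: "(\<Sum>f\<in>Hom C (c i) d. single i f (y i f) j g) = (if j = i \<and> g \<in> Hom C (c i) d then y i g else 0)" for i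
  proof (cases "j = i")
    case True
    have "(\<Sum>f\<in>Hom C (c i) d. single i f (y i f) j g) = (\<Sum>f\<in>Hom C (c i) d. if g = f then y i f else 0)"
      using True by (intro sum.cong) (auto simp: single_def)
    also have "\<dots> = (if g \<in> Hom C (c i) d then y i g else 0)" by (simp add: finHom)
    finally show ?thesis using True by simp
  next
    case False then show ?thesis by (simp add: single_def)
  qed
  have "(\<Sum>i\<in>I d. \<Sum>f\<in>Hom C (c i) d. single i f (y i f)) j g
      = (\<Sum>i\<in>I d. if j = i then (if g \<in> Hom C (c j) d then y j g else 0) else 0)"
    by (simp add: sum_fun_apply inner cong: if_cong) (intro sum.cong; auto)
  also have "\<dots> = (if j \<in> I d \<and> g \<in> Hom C (c j) d then y j g else 0)"
    by (simp add: finI)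
  also have "\<dots> = y j g"
  proof (cases "j < n \<and> g \<in> Hom C (c j) d")
    case True then show ?thesis by (auto simp: I_def)
  next
    case False then show ?thesis using PD2[OF y False] by (auto simp: I_def)
  qed
  finally show "y j g = (\<Sum>i\<in>I d. \<Sum>f\<in>Hom C (c i) d. single i f (y i f)) j g" by simp
qed

lemma K_back: assumes y: "y \<in> P d" and s: "Phi d y \<in> SK" shows "y \<in> K d"
proof -
  have ps: "Psi d (Phi d y) \<in> K d" by (rule Psi_SK[OF s])
  have "Psi d (Phi d y) = (\<Sum>i\<in>I d. single i (f0 d i) (\<Sum>f\<in>Hom C (c i) d. y i f))"
    unfolding Psi_def by (intro sum.cong) (auto simp: Phi_def I_def)
  also have "\<dots> = (\<Sum>i\<in>I d. \<Sum>f\<in>Hom C (c i) d. single i (f0 d i) (y i f))"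
    by (simp add: single_sum)
  finally have eq: "Psi d (Phi d y) = \<dots>" .
  have "y - Psi d (Phi d y) = (\<Sum>i\<in>I d. \<Sum>f\<in>Hom C (c i) d. single i f (y i f) - single i (f0 d i) (y i f))"
    by (subst decomp[OF y]) (simp add: eq sum_subtractf)
  also have "\<dots> \<in> K d" unfolding coinv_ker_def
  proof (intro M.span_sum)
    fix i f assume i: "i \<in> I d" and f: "f \<in> Hom C (c i) d"
    have "i < n" "f0 d i \<in> Hom C (c i) d" using i f0_Hom by (auto simp: I_def)
    then show "single i f (y i f) - single i (f0 d i) (y i f) \<in> module.span (msc sc)
      (tens_rel C sc n c V rho d \<union> {push C c d g x - x |g x. g \<in> Aut C d \<and> x \<in> P d})"
      using gen_a[OF _ f _ PD1[OF y _ f]] unfolding coinv_ker_def by blast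
  qed
  finally have "y - Psi d (Phi d y) \<in> K d" .
  then have "(y - Psi d (Phi d y)) + Psi d (Phi d y) \<in> K d"
    using ps unfolding coinv_ker_def by (rule M.span_add)
  then show ?thesis by simp
qed

lemma K_fwd: assumes x: "x \<in> K d" shows "Phi d x \<in> SK"
proof -
  have sub: "M.subspace {x. Phi d x \<in> SK}"
    unfolding M.subspace_def sum_coinv_ker_def
    by (auto simp: Phi_zero Phi_add Phi_scale intro: F.span_zero F.span_add F.span_scale)
  have T: "Phi d t \<in> SK" if t: "t \<in> tens_rel C sc n c V rho d" for t
    using t unfolding tens_rel_def
  proof (induction rule: M.span_induct)
    case base then show ?case using sub by simp
  next
    case (step t)
    then obtain i f g v where t: "t = single i (comp C f g) v - single i f (rho i g v)"
      and h: "i < n" "f \<in> Hom C (c i) d" "g \<in> Aut C (c i)" "v \<in> V i" by blast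
    have fg: "comp C f g \<in> Hom C (c i) d" by (rule compHom[OF Aut_Hom[OF h(3)] h(2)])
    have "Phi d t = - (\<lambda>j. if j = i then rho i g v - v else 0)"
      unfolding t Phi_diff Phi_single[OF h(1) fg] Phi_single[OF h(1) h(2)] by (auto simp: fun_eq_iff)
    moreover have "- (\<lambda>j. if j = i then rho i g v - v else 0) \<in> SK"
      unfolding sum_coinv_ker_def by (rule F.span_neg, rule F.span_base) (use h in blast)
    ultimately show ?case by (simp only:)
  qed
  show ?thesis using x unfolding coinv_ker_def
  proof (induction rule: M.span_induct)
    case base then show ?case using sub by simp
  next
    case (step t)
    then show ?case
    proof
      assume "t \<in> tens_rel C sc n c V rho d" then show ?thesis by (rule T)
    next
      assume "t \<in> {push C c d g x - x | g x. g \<in> Aut C d \<and> x \<in> P d}"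
      then obtain g x where "t = push C c d g x - x" "g \<in> Aut C d" by blast
      then have "Phi d t = 0" by (simp add: Phi_diff Phi_push[OF Aut_Hom])
      then show ?thesis unfolding sum_coinv_ker_def by (simp only: F.span_zero)
    qed
  qed
qed


lemma inj_push:
  assumes phi: "phi \<in> Hom C d e"
  shows "induced_inj (P d) (K d) (K e) (push C c d phi)"
  unfolding induced_inj_def
proof (intro ballI impI)
  fix x assume x: "x \<in> P d" and px: "push C c d phi x \<in> K e"
  have "Phi d x \<in> SK" using K_fwd[OF px] Phi_push[OF phi] by simp
  then show "x \<in> K d" by (rule K_back[OF x])
qed

lemma Psi_P: assumes w: "\<forall>i<n. w i \<in> V i" shows "Psi d w \<in> P d"
  unfolding Psi_def
proof (rule M.subspace_sum[OF P_sub])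
  fix i assume i: "i \<in> I d"
  then have "i < n" "f0 d i \<in> Hom C (c i) d" using f0_Hom by (auto simp: I_def)
  then show "single i (f0 d i) (w i) \<in> P d" using single_P w by blast
qed

lemma Phi_Psi:
  assumes w: "w \<in> sum_reps n V" and z: "\<forall>i<n. Hom C (c i) d = {} \<longrightarrow> w i = 0"
  shows "Phi d (Psi d w) = w"
proof -
  have "Phi d (Psi d w) = (\<Sum>i\<in>I d. Phi d (single i (f0 d i) (w i)))"
    unfolding Psi_def by (rule Phi_sum)
  also have "\<dots> = (\<Sum>i\<in>I d. (\<lambda>j. if j = i then w i else 0))"
  proof (rule sum.cong[OF refl])
    fix i assume i: "i \<in> I d"
    then have "i < n" "f0 d i \<in> Hom C (c i) d" using f0_Hom by (auto simp: I_def)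
    then show "Phi d (single i (f0 d i) (w i)) = (\<lambda>j. if j = i then w i else 0)" by (rule Phi_single)
  qed
  also have "\<dots> = w"
  proof (rule ext)
    fix j
    have "(\<Sum>i\<in>I d. (\<lambda>j. if j = i then w i else 0)) j = (\<Sum>i\<in>I d. if j = i then w i else 0)"
      by (simp only: sum_fun_apply)
    also have "\<dots> = (if j \<in> I d then w j else 0)" by (simp add: finI)
    also have "\<dots> = w j" using w z by (auto simp: I_def sum_reps_def)
    finally show "(\<Sum>i\<in>I d. (\<lambda>j. if j = i then w i else 0)) j = w j" .
  qed
  finally show ?thesis .
qed

lemma surj_push:
  assumes phi: "phi \<in> Hom C d e"
    and z: "\<forall>i<n. Hom C (c i) d = {} \<longrightarrow> V i = {0}"
  shows "induced_surj (P d) (P e) (K e) (push C c d phi)"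
  unfolding induced_surj_def
proof
  fix y assume y: "y \<in> P e"
  define w where "w = Phi e y"
  have wr: "w \<in> sum_reps n V" unfolding w_def by (rule Phi_P[OF y])
  have wz: "\<forall>i<n. Hom C (c i) d = {} \<longrightarrow> w i = 0"
  proof (intro allI impI)
    fix i assume i: "i < n" and h: "Hom C (c i) d = {}"
    have "\<forall>f\<in>Hom C (c i) e. y i f = 0" using PD1[OF y i] z i h by blast
    then show "w i = 0" unfolding w_def Phi_def by simp
  qed
  have wV: "\<forall>i<n. w i \<in> V i" using wr by (simp add: sum_reps_def)
  define x where "x = Psi d w"
  have xP: "x \<in> P d" unfolding x_def by (rule Psi_P[OF wV])
  have xw: "Phi d x = Phi e y" unfolding x_def using Phi_Psi[OF wr wz] w_def by simp
  have "y - push C c d phi x \<in> P e"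
    by (rule M.subspace_diff[OF P_sub y push_P[OF phi xP]])
  moreover have "Phi e (y - push C c d phi x) = 0"
    by (simp add: Phi_diff Phi_push[OF phi] xw)
  then have "Phi e (y - push C c d phi x) \<in> SK"
    unfolding sum_coinv_ker_def by (simp only: F.span_zero)
  ultimately have "y - push C c d phi x \<in> K e" by (rule K_back)
  then show "\<exists>x\<in>P d. y - push C c d phi x \<in> K e" using xP by blast
qed

lemma qiso:
  assumes all: "\<forall>i<n. Hom C (c i) d \<noteq> {}"
  shows "quot_iso (msc sc) (P d) (K d) (fsc sc) (sum_reps n V) SK"
  unfolding quot_iso_def
proof (intro exI[of _ "Phi d"] conjI)
  show "\<forall>x\<in>P d. Phi d x \<in> sum_reps n V" using Phi_P by blast
  show "lin_on (msc sc) (fsc sc) (P d) (Phi d)"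
    unfolding lin_on_def by (simp add: Phi_add Phi_scale)
  show "\<forall>x\<in>K d. Phi d x \<in> SK" using K_fwd by blast
  show "induced_inj (P d) (K d) SK (Phi d)"
    unfolding induced_inj_def using K_back by blast
  show "induced_surj (P d) (sum_reps n V) SK (Phi d)"
    unfolding induced_surj_def
  proof
    fix w assume w: "w \<in> sum_reps n V"
    have wV: "\<forall>i<n. w i \<in> V i" using w by (simp add: sum_reps_def)
    have "Phi d (Psi d w) = w" using Phi_Psi[OF w] all by blast
    then have "w - Phi d (Psi d w) = 0" by simp
    then have "w - Phi d (Psi d w) \<in> SK" unfolding sum_coinv_ker_def by (simp only: F.span_zero)
    then show "\<exists>x\<in>P d. w - Phi d x \<in> SK" using Psi_P[OF wV] by blast
  qed
qed

end

theorem mainTheorem12: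
  fixes C :: "('o, 'm) cat"
    and sc :: "complex \<Rightarrow> 'v::ab_group_add \<Rightarrow> 'v"
    and n :: nat and c :: "nat \<Rightarrow> 'o" and V :: "nat \<Rightarrow> 'v set"
    and rho :: "nat \<Rightarrow> 'm \<Rightarrow> 'v \<Rightarrow> 'v" and c0 :: 'o
  assumes FI: "FI_type C"
    and vs: "vector_space sc"
    and objs: "\<forall>i<n. c i \<in> Ob C"
    and reps: "\<forall>i<n. is_rep C sc (c i) (V i) (rho i)"
    and c0: "c0 \<in> Ob C"
    and deg: "\<forall>i<n. V i \<noteq> {0} \<longrightarrow> obj_le C (c i) c0"
  shows "(\<forall>d\<in>Ob C. \<forall>e\<in>Ob C. \<forall>phi\<in>Hom C d e.
            induced_inj (pre_mod C n c V d) (coinv_ker C sc n c V rho d)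
                        (coinv_ker C sc n c V rho e) (push C c d phi))
       \<and> (\<forall>d\<in>Ob C. \<forall>e\<in>Ob C. \<forall>phi\<in>Hom C d e. obj_le C c0 d \<longrightarrow>
            induced_inj (pre_mod C n c V d) (coinv_ker C sc n c V rho d)
                        (coinv_ker C sc n c V rho e) (push C c d phi) \<and>
            induced_surj (pre_mod C n c V d) (pre_mod C n c V e)
                         (coinv_ker C sc n c V rho e) (push C c d phi))
       \<and> (\<forall>d\<in>Ob C. (\<forall>i<n. obj_le C (c i) d) \<longrightarrow>
            quot_iso (msc sc) (pre_mod C n c V d) (coinv_ker C sc n c V rho d)
                     (fsc sc) (sum_reps n V) (sum_coinv_ker C sc n c V rho))"
proof -
  interpret fis C sc n c V rho by (rule fis.intro[OF FI vs objs reps])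
  have A: "\<forall>d\<in>Ob C. \<forall>e\<in>Ob C. \<forall>phi\<in>Hom C d e.
            induced_inj (pre_mod C n c V d) (coinv_ker C sc n c V rho d)
                        (coinv_ker C sc n c V rho e) (push C c d phi)"
    using inj_push by blast
  have B: "induced_surj (pre_mod C n c V d) (pre_mod C n c V e)
                         (coinv_ker C sc n c V rho e) (push C c d phi)"
    if phi: "phi \<in> Hom C d e" and le: "obj_le C c0 d" for d e phi
  proof (rule surj_push[OF phi], intro allI impI)
    fix i assume i: "i < n" and h: "Hom C (c i) d = {}"
    show "V i = {0}"
    proof (rule ccontr)
      assume "V i \<noteq> {0}"
      then obtain f where f: "f \<in> Hom C (c i) c0" using deg i by (auto simp: obj_le_def)
      obtain g where g: "g \<in> Hom C c0 d" using le by (auto simp: obj_le_def)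
      show False using compHom[OF f g] h by blast
    qed
  qed
  show ?thesis using A B qiso by (auto simp: obj_le_def)
qed
end
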